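(* Let $X$ be a nonempty finite set and let $NG$ be an NG-group on $X$. Then the directed multigraph $(NG)_{dig}$ is not strongly connected.
   Context: An NG-group on a set $X$ is a set of maps $X \to X$ that forms a group under composition of functions and is not contained in the symmetric group $\mathrm{Sym}(X)$. The directed multigraph $(NG)_{dig}$ has vertex set $X$. For every $f \in NG$ and every $x \in X$ there is one arc from $x$ to $f(x)$. A digraph is strongly connected if for every ordered pair of vertices $(u, v)$ there is a directed path from $u$ to $v$. *)

theory Defs
  imports "HOL-Algebra.Group" "HOL-Library.FuncSet"
begin

definition NG_group :: "'a set \<Rightarrow> ('a \<Rightarrow> 'a) set \<Rightarrow> bool" where
  "NG_group X G \<longleftrightarrow>
     G \<subseteq> (X \<rightarrow>\<^sub>E X) \<and>
     (\<exists>e. group \<lparr>carrier = G, monoid.mult = (\<lambda>f g. compose X f g), one = e\<rparr>) \<and>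
     \<not> G \<subseteq> {f. bij_betw f X X}"

text \<open>Arc relation of the directed multigraph (NG)_dig (multiplicities are
  irrelevant for reachability).\<close>

definition NG_dig_arcs :: "'a set \<Rightarrow> ('a \<Rightarrow> 'a) set \<Rightarrow> ('a \<times> 'a) set" where
  "NG_dig_arcs X G = {(x, f x) | x f. x \<in> X \<and> f \<in> G}"

definition strongly_connected :: "'a set \<Rightarrow> ('a \<times> 'a) set \<Rightarrow> bool" where
  "strongly_connected V E \<longleftrightarrow> (\<forall>u\<in>V. \<forall>v\<in>V. (u, v) \<in> E\<^sup>*)"

end

theory Submission
  imports Defs
begin

theorem mainTheorem5:
  fixes X :: "'a set" and NG :: "('a \<Rightarrow> 'a) set"
  assumes "finite X" and "X \<noteq> {}" and "NG_group X NG"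
  shows "\<not> strongly_connected X (NG_dig_arcs X NG)"
proof
  assume sc: "strongly_connected X (NG_dig_arcs X NG)"
  from assms(3) have sub: "NG \<subseteq> X \<rightarrow>\<^sub>E X"
    and nb: "\<not> NG \<subseteq> {f. bij_betw f X X}"
    unfolding NG_group_def by auto
  from assms(3) obtain e where
    grp: "group \<lparr>carrier = NG, monoid.mult = (\<lambda>f g. compose X f g), one = e\<rparr>"
    unfolding NG_group_def by auto
  define G where "G = \<lparr>carrier = NG, monoid.mult = (\<lambda>f g. compose X f g), one = e\<rparr>"
  interpret group G using grp G_def by simp
  have eG: "e \<in> NG" using one_closed G_def by simp
  have lid: "compose X e f = f" if "f \<in> NG" for f
    using l_one[of f] that G_def by simp
  have fix1: "e (f x) = f x" if "f \<in> NG" "x \<in> X" for f x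
    using lid[OF that(1)] that(2) by (metis compose_eq)
  have eX: "e x \<in> X" if "x \<in> X" for x using sub eG that by auto
  have "\<exists>v\<in>X. e v \<noteq> v"
  proof (rule ccontr)
    assume "\<not> ?thesis"
    hence eid: "\<And>x. x \<in> X \<Longrightarrow> e x = x" by auto
    have "NG \<subseteq> {f. bij_betw f X X}"
    proof
      fix f assume f: "f \<in> NG"
      then obtain g where g: "g \<in> NG" "compose X g f = e" "compose X f g = e"
        using inv_closed[of f] l_inv[of f] r_inv[of f] G_def
        by (metis monoid.select_convs(1) monoid.select_convs(2) partial_object.select_convs(1))
      have fX: "f x \<in> X" if "x \<in> X" for x using sub f that by auto
      have gX: "g x \<in> X" if "x \<in> X" for x using sub g that by auto
      have gf: "g (f x) = x" if "x \<in> X" for x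
        using g(2) eid[OF that] that by (metis compose_eq)
      have fg: "f (g x) = x" if "x \<in> X" for x
        using g(3) eid[OF that] that by (metis compose_eq)
      have "bij_betw f X X"
        by (rule bij_betwI[of f X X g]) (auto simp: fX gX gf fg)
      thus "f \<in> {f. bij_betw f X X}" by simp
    qed
    with nb show False by simp
  qed
  then obtain v where v: "v \<in> X" "e v \<noteq> v" by auto
  have "(e v, v) \<in> (NG_dig_arcs X NG)\<^sup>*"
    using sc v eX unfolding strongly_connected_def by auto
  then obtain z where "(z, v) \<in> NG_dig_arcs X NG"
    using v(2) by (metis rtranclE)
  then obtain f x where "v = f x" "f \<in> NG" "x \<in> X"
    unfolding NG_dig_arcs_def by auto
  with fix1 v(2) show False by auto
qed

end
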